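(* Let $q$ be a prime power, $l\ge1$, $t=q^l$, $G_6(x)=x^{t+1}+1$, and $L_6=\{\alpha\in GF(t^2):\ G_6(\alpha)\ne0\}$. For every integer $i$ with $1<i<q-1$, the minimum distance of the $q$-ary Goppa code $\Gamma_6^{(i)}=\Gamma(L_6,G_6^{\,i})$ equals $i(t+1)+1$.
   Context: For a set $L=\{\alpha_1,\dots,\alpha_n\}$ of distinct elements of $GF(t^2)$ and $P\in GF(t^2)[x]$ with $P(\alpha_k)\neq0$ for all $k$, the $q$-ary Goppa code is $\Gamma(L,P)=\{c\in GF(q)^n:\ \sum_k \frac{c_k}{x-\alpha_k}\equiv 0 \pmod{P(x)}\}$; its minimum distance is the minimum Hamming weight of a nonzero codeword. *)

theory Defs
  imports "HOL-Computational_Algebra.Computational_Algebra" "HOL-Library.Cardinality"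
begin

text \<open>The subfield GF(q) of a finite field F with q | ... is the set of roots of x^q - x.\<close>
definition subfield_GF :: "nat \<Rightarrow> 'a::field set" where
  "subfield_GF q = {x. x ^ q = x}"

text \<open>An inverse of (x - a) modulo P, i.e. a polynomial u with (x - a) u = 1 mod P
  (unique modulo P when P(a) is nonzero).\<close>
definition inv_mod_lin :: "'a::field poly \<Rightarrow> 'a \<Rightarrow> 'a poly" where
  "inv_mod_lin P a = (SOME u. P dvd ([:-a, 1:] * u - 1))"

text \<open>q-ary Goppa code Gamma(L,P): words indexed by the elements of L, entries in GF(q),
  with sum_k c_k/(x - alpha_k) = 0 mod P.\<close>
definition goppa_code :: "nat \<Rightarrow> 'a::field set \<Rightarrow> 'a poly \<Rightarrow> ('a \<Rightarrow> 'a) set" where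
  "goppa_code q L P = {c. (\<forall>a. a \<notin> L \<longrightarrow> c a = 0) \<and> (\<forall>a\<in>L. c a \<in> subfield_GF q) \<and>
      P dvd (\<Sum>a\<in>L. smult (c a) (inv_mod_lin P a))}"

definition hamming_weight :: "'b set \<Rightarrow> ('b \<Rightarrow> 'a::zero) \<Rightarrow> nat" where
  "hamming_weight L c = card {a\<in>L. c a \<noteq> 0}"

definition min_distance :: "'b set \<Rightarrow> ('b \<Rightarrow> 'a::zero) set \<Rightarrow> nat" where
  "min_distance L C = Inf {hamming_weight L c | c. c \<in> C \<and> c \<noteq> (\<lambda>_. 0)}"

end

theory Submission
  imports Defs
begin

lemma dvd_pow_diff: "(x - y :: 'a::comm_ring_1) dvd x ^ n - y ^ n"
  by (metis dvdI power_diff_sumr2)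

lemma fin_field_pow_card:
  fixes x :: "'a::{field,finite}"
  shows "x ^ CARD('a) = x"
proof (cases "x = 0")
  case False
  have "x * (\<Prod>y\<in>UNIV-{0}. x * y) = x * x ^ (CARD('a) - 1) * \<Prod>(UNIV-{0})"
    by (simp add: prod.distrib mult_ac)
  also have "x * x ^ (CARD('a) - 1) = x ^ Suc (CARD('a) - 1)"
    by (subst power_Suc) auto
  also have "Suc (CARD('a) - 1) = CARD('a)"
    using finite_UNIV_card_ge_0[where ?'a = 'a] by simp
  also have "(\<Prod>y\<in>UNIV-{0}. x * y) = (\<Prod>y\<in>UNIV-{0}. y)"
    by (rule prod.reindex_bij_witness[of _ "\<lambda>y. y / x" "\<lambda>y. x * y"]) (use False in auto)
  finally show ?thesis
    by simp
qed (use finite_UNIV_card_ge_0[where ?'a = 'a] in auto)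

lemma roots_divisor:
  fixes f g :: "'a::idom poly"
  assumes "f dvd g" "g \<noteq> 0" "card {x. poly g x = 0} = degree g"
  shows "card {x. poly f x = 0} = degree f"
proof -
  obtain h where g: "g = f * h" using assms(1) by blast
  have f0: "f \<noteq> 0" and h0: "h \<noteq> 0" using assms(2) g by auto
  have "{x. poly g x = 0} = {x. poly f x = 0} \<union> {x. poly h x = 0}" using g by auto
  hence "degree g \<le> card {x. poly f x = 0} + card {x. poly h x = 0}"
    using assms(3) card_Un_le by metis
  moreover have "degree g = degree f + degree h" using g f0 h0 degree_mult_eq by blast
  moreover have "card {x. poly f x = 0} \<le> degree f" using card_poly_roots_bound f0 by blast
  moreover have "card {x. poly h x = 0} \<le> degree h" using card_poly_roots_bound h0 by blast
  ultimately show ?thesis by linarith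
qed

lemma prod_roots_dvd:
  fixes p :: "'a::field poly"
  assumes "finite S" "\<forall>x\<in>S. poly p x = 0"
  shows "(\<Prod>x\<in>S. [:-x,1:]) dvd p"
  using assms
proof (induction S arbitrary: p rule: finite_induct)
  case empty then show ?case by simp
next
  case (insert a S)
  have "[:-a,1:] dvd p" using insert.prems by (simp add: poly_eq_0_iff_dvd)
  then obtain r where r: "p = [:-a,1:] * r" by blast
  have "\<forall>x\<in>S. poly r x = 0"
  proof
    fix x assume "x \<in> S"
    hence "x \<noteq> a" using insert.hyps by auto
    moreover have "poly p x = 0" using insert.prems \<open>x\<in>S\<close> by auto
    ultimately show "poly r x = 0" using r by simp
  qed
  hence "(\<Prod>x\<in>S. [:-x,1:]) dvd r" using insert.IH by blast
  hence "[:-a,1:] * (\<Prod>x\<in>S. [:-x,1:]) dvd p" unfolding r by (rule mult_dvd_mono[OF dvd_refl])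
  thus ?case using insert.hyps by simp
qed

lemma degree_prod_lin: "finite S \<Longrightarrow> degree (\<Prod>x\<in>S. [:-x,1::'a::field:]) = card S"
  by (subst degree_prod_eq_sum_degree) auto

lemma monic_prod_lin: "finite S \<Longrightarrow> lead_coeff (\<Prod>x\<in>S. [:-x,1::'a::field:]) = 1"
  by (simp add: lead_coeff_prod)

lemma split_poly:
  fixes p :: "'a::field poly"
  assumes "p \<noteq> 0" "card {x. poly p x = 0} = degree p"
  shows "p = smult (lead_coeff p) (\<Prod>x\<in>{x. poly p x = 0}. [:-x,1:])"
proof -
  define S where "S = {x. poly p x = 0}"
  have fin: "finite S" using poly_roots_finite assms unfolding S_def by blast
  define Q where "Q = (\<Prod>x\<in>S. [:-x,1:])"
  have "\<forall>x\<in>S. poly p x = 0" unfolding S_def by simp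
  then obtain r where r: "p = Q * r" using prod_roots_dvd[OF fin] unfolding Q_def by blast
  have Q0: "Q \<noteq> 0" using fin unfolding Q_def by (simp)
  have r0: "r \<noteq> 0" using r assms by auto
  have "degree p = degree Q + degree r" using degree_mult_eq[OF Q0 r0] r by simp
  hence "degree r = 0" using degree_prod_lin[OF fin] assms(2) unfolding Q_def S_def by simp
  then obtain c where c: "r = [:c:]" using degree_eq_zeroE by blast
  have "lead_coeff p = lead_coeff Q * lead_coeff r" using r lead_coeff_mult by metis
  hence lc: "lead_coeff p = c" using c monic_prod_lin[OF fin] unfolding Q_def by simp
  have pc: "p = smult c Q" using r c by (simp add: mult.commute)
  have "p = smult (lead_coeff p) Q" by (subst lc) (rule pc)
  thus ?thesis unfolding Q_def S_def .
qed

lemma poly_pderiv_prod_lin: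
  fixes a :: "'a::field"
  assumes "finite S" "a \<in> S"
  shows "poly (pderiv (\<Prod>b\<in>S. [:-b,1:])) a = (\<Prod>b\<in>S-{a}. a - b)"
proof -
  have "pderiv (\<Prod>b\<in>S. [:-b,1:]) = (\<Sum>c\<in>S. (\<Prod>b\<in>S-{c}. [:-b,1:]))"
    by (simp add: pderiv_prod pderiv_pCons)
  hence "poly (pderiv (\<Prod>b\<in>S. [:-b,1:])) a = (\<Sum>c\<in>S. (\<Prod>b\<in>S-{c}. a - b))"
    by (simp add: poly_sum poly_prod)
  also have "\<dots> = (\<Prod>b\<in>S-{a}. a - b)"
  proof (subst sum.remove[OF assms])
    have "(\<Sum>c\<in>S-{a}. (\<Prod>b\<in>S-{c}. a - b)) = 0"
    proof (rule sum.neutral, rule ballI)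
      fix c assume "c \<in> S - {a}"
      hence "a \<in> S - {c}" using assms by auto
      thus "(\<Prod>b\<in>S-{c}. a - b) = 0" using assms(1) by simp
    qed
    thus "(\<Prod>b\<in>S-{a}. a - b) + (\<Sum>c\<in>S-{a}. (\<Prod>b\<in>S-{c}. a - b)) = (\<Prod>b\<in>S-{a}. a - b)" by simp
  qed
  finally show ?thesis .
qed

lemma of_nat_card_0: "of_nat CARD('a::{ring_1,finite}) = (0::'a)"
proof -
  have "(\<Sum>y\<in>UNIV. y + (1::'a)) = (\<Sum>y\<in>UNIV. y)"
    by (rule sum.reindex_bij_witness[of _ "\<lambda>y. y - 1" "\<lambda>y. y + 1"]) auto
  moreover have "(\<Sum>y\<in>UNIV. y + (1::'a)) = (\<Sum>y\<in>UNIV. y) + of_nat CARD('a)"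
    by (simp only: sum.distrib sum_constant) simp
  ultimately show ?thesis by simp
qed

lemma CHAR_dvd_CARD': "CHAR('a::{ring_1,finite}) dvd CARD('a)"
  using of_nat_card_0 of_nat_eq_0_iff_char_dvd by blast

lemma inv_mod_lin_prop:
  fixes P :: "'a::field poly"
  assumes "poly P a \<noteq> 0"
  shows "P dvd [:-a,1:] * inv_mod_lin P a - 1"
proof -
  have "poly (P - [:poly P a:]) a = 0" by simp
  then obtain Q where Q: "P - [:poly P a:] = [:-a,1:] * Q" using poly_eq_0_iff_dvd by blast
  define u where "u = smult (- inverse (poly P a)) Q"
  have "[:-a,1:] * u - 1 = smult (- inverse (poly P a)) (P - [:poly P a:]) - 1"
    unfolding u_def Q by (simp add: mult_smult_right)
  also have "\<dots> = smult (- inverse (poly P a)) P"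
    using assms by (simp add: smult_diff_right one_pCons)
  finally have eq: "[:-a,1:] * u - 1 = smult (- inverse (poly P a)) P" .
  have "P dvd smult (- inverse (poly P a)) P" by (rule dvd_smult[OF dvd_refl])
  hence "P dvd [:-a,1:] * u - 1" unfolding eq .
  hence "\<exists>u. P dvd [:-a,1:] * u - 1" by blast
  thus ?thesis unfolding inv_mod_lin_def by (rule someI_ex)
qed

lemma aux_alg: "PP = l * R \<Longrightarrow> smult (c::'a::comm_ring_1) (PP * u) - smult c R = smult c (R * (l * u - 1))"
  by (simp add: algebra_simps smult_diff_right)

lemma cong_key:
  fixes P :: "'a::field poly"
  assumes fin: "finite S" and u: "\<forall>a\<in>S. P dvd [:-a,1:] * u a - 1"
  shows "P dvd (\<Prod>b\<in>S. [:-b,1:]) * (\<Sum>a\<in>S. smult (c a) (u a))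
                - (\<Sum>a\<in>S. smult (c a) (\<Prod>b\<in>S-{a}. [:-b,1:]))"
proof -
  have "(\<Prod>b\<in>S. [:-b,1:]) * (\<Sum>a\<in>S. smult (c a) (u a))
        = (\<Sum>a\<in>S. smult (c a) ((\<Prod>b\<in>S. [:-b,1:]) * u a))"
    by (simp add: sum_distrib_left mult_smult_right)
  hence "(\<Prod>b\<in>S. [:-b,1:]) * (\<Sum>a\<in>S. smult (c a) (u a))
                - (\<Sum>a\<in>S. smult (c a) (\<Prod>b\<in>S-{a}. [:-b,1:]))
     = (\<Sum>a\<in>S. smult (c a) ((\<Prod>b\<in>S. [:-b,1:]) * u a) - smult (c a) (\<Prod>b\<in>S-{a}. [:-b,1:]))"
    by (simp only: sum_subtractf)
  also have "\<dots> = (\<Sum>a\<in>S. smult (c a) ((\<Prod>b\<in>S-{a}. [:-b,1:]) * ([:-a,1:] * u a - 1)))"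
  proof (rule sum.cong[OF refl])
    fix a assume "a \<in> S"
    hence "(\<Prod>b\<in>S. [:-b,1:]) = [:-a,1:] * (\<Prod>b\<in>S-{a}. [:-b,1:])"
      by (rule prod.remove[OF fin])
    thus "smult (c a) ((\<Prod>b\<in>S. [:-b,1:]) * u a) - smult (c a) (\<Prod>b\<in>S-{a}. [:-b,1:])
       = smult (c a) ((\<Prod>b\<in>S-{a}. [:-b,1:]) * ([:-a,1:] * u a - 1))"
      by (rule aux_alg)
  qed
  finally have eq: "(\<Prod>b\<in>S. [:-b,1:]) * (\<Sum>a\<in>S. smult (c a) (u a))
                - (\<Sum>a\<in>S. smult (c a) (\<Prod>b\<in>S-{a}. [:-b,1:]))
     = (\<Sum>a\<in>S. smult (c a) ((\<Prod>b\<in>S-{a}. [:-b,1:]) * ([:-a,1:] * u a - 1)))" .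
  show ?thesis unfolding eq
    by (rule dvd_sum) (use u in \<open>auto intro: dvd_smult dvd_mult\<close>)
qed

lemma N_eval:
  fixes c :: "'a \<Rightarrow> 'a::field"
  assumes "finite S" "x \<in> S"
  shows "poly (\<Sum>a\<in>S. smult (c a) (\<Prod>b\<in>S-{a}. [:-b,1:])) x = c x * (\<Prod>b\<in>S-{x}. x - b)"
proof -
  have "poly (\<Sum>a\<in>S. smult (c a) (\<Prod>b\<in>S-{a}. [:-b,1:])) x = (\<Sum>a\<in>S. c a * (\<Prod>b\<in>S-{a}. x - b))"
    by (simp add: poly_sum poly_prod)
  also have "\<dots> = c x * (\<Prod>b\<in>S-{x}. x - b) + (\<Sum>a\<in>S-{x}. c a * (\<Prod>b\<in>S-{a}. x - b))"
    using assms by (simp add: sum.remove)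
  also have "(\<Sum>a\<in>S-{x}. c a * (\<Prod>b\<in>S-{a}. x - b)) = 0"
  proof (rule sum.neutral, rule ballI)
    fix a assume "a \<in> S - {x}"
    hence "x \<in> S - {a}" using assms by auto
    thus "c a * (\<Prod>b\<in>S-{a}. x - b) = 0" using assms(1) by simp
  qed
  finally show ?thesis by simp
qed

lemma N_deg:
  fixes c :: "'a \<Rightarrow> 'a::field"
  assumes "finite S"
  shows "degree (\<Sum>a\<in>S. smult (c a) (\<Prod>b\<in>S-{a}. [:-b,1:])) \<le> card S - 1"
proof (rule degree_sum_le[OF assms])
  fix a assume "a \<in> S"
  have "degree (smult (c a) (\<Prod>b\<in>S-{a}. [:-b,1:])) \<le> degree (\<Prod>b\<in>S-{a}. [:-b,1:])"
    by (rule degree_smult_le)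
  also have "\<dots> = card (S - {a})" using assms by (simp add: degree_prod_lin)
  also have "\<dots> = card S - 1" using assms \<open>a\<in>S\<close> by simp
  finally show "degree (smult (c a) (\<Prod>b\<in>S-{a}. [:-b,1:])) \<le> card S - 1" .
qed

lemma goppa_lower:
  fixes P :: "'a::field poly" and c :: "'a \<Rightarrow> 'a"
  assumes P0: "P \<noteq> 0" and finL: "finite L" and PL: "\<forall>a\<in>L. poly P a \<noteq> 0"
    and out: "\<forall>a. a \<notin> L \<longrightarrow> c a = 0"
    and dv: "P dvd (\<Sum>a\<in>L. smult (c a) (inv_mod_lin P a))"
    and nz: "c \<noteq> (\<lambda>_. 0)"
  shows "degree P + 1 \<le> card {a\<in>L. c a \<noteq> 0}"
proof -
  define W where "W = {a\<in>L. c a \<noteq> 0}"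
  have finW: "finite W" using finL unfolding W_def by simp
  obtain a0 where "c a0 \<noteq> 0" using nz by auto
  hence a0: "a0 \<in> W" using out unfolding W_def by auto
  have sumW: "(\<Sum>a\<in>L. smult (c a) (inv_mod_lin P a)) = (\<Sum>a\<in>W. smult (c a) (inv_mod_lin P a))"
    by (rule sum.mono_neutral_right[OF finL]) (auto simp: W_def)
  define N where "N = (\<Sum>a\<in>W. smult (c a) (\<Prod>b\<in>W-{a}. [:-b,1:]))"
  have u: "\<forall>a\<in>W. P dvd [:-a,1:] * inv_mod_lin P a - 1"
    using PL inv_mod_lin_prop unfolding W_def by blast
  have k: "P dvd (\<Prod>b\<in>W. [:-b,1:]) * (\<Sum>a\<in>W. smult (c a) (inv_mod_lin P a)) - N"
    unfolding N_def by (rule cong_key[OF finW u])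
  have h: "P dvd (\<Prod>b\<in>W. [:-b,1:]) * (\<Sum>a\<in>W. smult (c a) (inv_mod_lin P a))"
    using dv unfolding sumW by (rule dvd_mult)
  have "P dvd (\<Prod>b\<in>W. [:-b,1:]) * (\<Sum>a\<in>W. smult (c a) (inv_mod_lin P a)) - ((\<Prod>b\<in>W. [:-b,1:]) * (\<Sum>a\<in>W. smult (c a) (inv_mod_lin P a)) - N)"
    by (rule dvd_diff[OF h k])
  hence PN: "P dvd N" by simp
  have "poly N a0 = c a0 * (\<Prod>b\<in>W-{a0}. a0 - b)" unfolding N_def by (rule N_eval[OF finW a0])
  also have "\<dots> \<noteq> 0" using \<open>c a0 \<noteq> 0\<close> finW by simp
  finally have N0: "N \<noteq> 0" by auto
  have "degree P \<le> degree N" by (rule dvd_imp_degree_le[OF PN N0])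
  also have "\<dots> \<le> card W - 1" unfolding N_def by (rule N_deg[OF finW])
  finally have "degree P \<le> card W - 1" .
  moreover have "card W > 0" using a0 finW card_gt_0_iff by blast
  ultimately show ?thesis unfolding W_def by linarith
qed

lemma prod_cong_one:
  fixes P :: "'b::comm_ring_1"
  assumes "finite S" "\<forall>a\<in>S. P dvd f a - 1"
  shows "P dvd (\<Prod>a\<in>S. f a) - 1"
  using assms
proof (induction S rule: finite_induct)
  case empty then show ?case by simp
next
  case (insert a S)
  have h1: "P dvd f a - 1" and h2: "P dvd (\<Prod>a\<in>S. f a) - 1" using insert by auto
  have "f a * (\<Prod>a\<in>S. f a) - 1 = f a * ((\<Prod>a\<in>S. f a) - 1) + (f a - 1)"
    by (simp add: algebra_simps)
  moreover have "P dvd f a * ((\<Prod>a\<in>S. f a) - 1) + (f a - 1)"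
    using h1 h2 by (simp add: dvd_add dvd_mult)
  ultimately have "P dvd f a * (\<Prod>a\<in>S. f a) - 1" by metis
  thus ?case by (simp only: prod.insert[OF insert.hyps])
qed

lemma inv_trick:
  fixes P :: "'b::comm_ring_1"
  assumes "P dvd X * V - 1" "P dvd X * Y"
  shows "P dvd Y"
proof -
  have "Y = V * (X * Y) - Y * (X * V - 1)" by (simp add: algebra_simps)
  moreover have "P dvd V * (X * Y) - Y * (X * V - 1)"
    using assms by (simp add: dvd_diff dvd_mult)
  ultimately show ?thesis by simp
qed

lemma goppa_upper:
  fixes P :: "'a::field poly" and c :: "'a \<Rightarrow> 'a"
  assumes finL: "finite L" and SL: "S \<subseteq> L" and PL: "\<forall>a\<in>L. poly P a \<noteq> 0"
    and cardS: "card S = degree P + 1"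
    and cS: "\<forall>x\<in>S. c x * (\<Prod>b\<in>S-{x}. x - b) = poly P x"
    and out: "\<forall>a. a \<notin> S \<longrightarrow> c a = 0"
  shows "P dvd (\<Sum>a\<in>L. smult (c a) (inv_mod_lin P a))"
proof -
  have finS: "finite S" using finL SL finite_subset by blast
  define N where "N = (\<Sum>a\<in>S. smult (c a) (\<Prod>b\<in>S-{a}. [:-b,1:]))"
  have NP: "N = P"
  proof (rule ccontr)
    assume ne: "N \<noteq> P"
    hence D0: "N - P \<noteq> 0" by simp
    have "S \<subseteq> {x. poly (N - P) x = 0}"
    proof
      fix x assume "x \<in> S"
      hence "poly N x = poly P x" unfolding N_def using N_eval[OF finS \<open>x\<in>S\<close>] cS by simp
      thus "x \<in> {x. poly (N - P) x = 0}" by simp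
    qed
    hence "card S \<le> card {x. poly (N - P) x = 0}"
      using poly_roots_finite[OF D0] card_mono by blast
    also have "\<dots> \<le> degree (N - P)" by (rule card_poly_roots_bound[OF D0])
    also have "\<dots> \<le> degree P"
      by (rule degree_diff_le) (use N_deg[OF finS, of c] cardS in \<open>simp_all add: N_def\<close>)
    finally show False using cardS by simp
  qed
  have u: "\<forall>a\<in>S. P dvd [:-a,1:] * inv_mod_lin P a - 1"
    using PL SL inv_mod_lin_prop by blast
  have k: "P dvd (\<Prod>b\<in>S. [:-b,1:]) * (\<Sum>a\<in>S. smult (c a) (inv_mod_lin P a)) - P"
    using cong_key[OF finS u, of c] unfolding N_def[symmetric] NP .
  hence "P dvd (\<Prod>b\<in>S. [:-b,1:]) * (\<Sum>a\<in>S. smult (c a) (inv_mod_lin P a)) - P + P"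
    by (rule dvd_add) simp
  hence h: "P dvd (\<Prod>b\<in>S. [:-b,1:]) * (\<Sum>a\<in>S. smult (c a) (inv_mod_lin P a))" by simp
  have "P dvd (\<Prod>b\<in>S. [:-b,1:] * inv_mod_lin P b) - 1"
    using finS u by (rule prod_cong_one)
  hence "P dvd (\<Prod>b\<in>S. [:-b,1:]) * (\<Prod>b\<in>S. inv_mod_lin P b) - 1"
    by (simp only: prod.distrib)
  hence "P dvd (\<Sum>a\<in>S. smult (c a) (inv_mod_lin P a))"
    using h by (rule inv_trick)
  moreover have "(\<Sum>a\<in>L. smult (c a) (inv_mod_lin P a)) = (\<Sum>a\<in>S. smult (c a) (inv_mod_lin P a))"
    by (rule sum.mono_neutral_right[OF finL SL]) (use out in auto)
  ultimately show ?thesis by simp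
qed

lemma SF_add: assumes "prime CHAR('a::field)" "q = CHAR('a)^k"
  "x \<in> subfield_GF q" "y \<in> subfield_GF q" shows "(x + y :: 'a) \<in> subfield_GF q"
  using assms freshmans_dream'[OF assms(1,2)] by (simp add: subfield_GF_def)

lemma SF_mult: "x \<in> subfield_GF q \<Longrightarrow> y \<in> subfield_GF q \<Longrightarrow> (x * y :: 'a::field) \<in> subfield_GF q"
  by (simp add: subfield_GF_def power_mult_distrib)

lemma SF_pow: "x \<in> subfield_GF q \<Longrightarrow> (x ^ n :: 'a::field) \<in> subfield_GF q"
  by (simp add: subfield_GF_def flip: power_mult) (metis mult.commute power_mult)

lemma SF_inverse: "x \<in> subfield_GF q \<Longrightarrow> (inverse x :: 'a::field) \<in> subfield_GF q"
  by (simp add: subfield_GF_def power_inverse)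

lemma SF_divide: "x \<in> subfield_GF q \<Longrightarrow> y \<in> subfield_GF q \<Longrightarrow> (x / y :: 'a::field) \<in> subfield_GF q"
  by (simp add: divide_inverse SF_mult SF_inverse)

lemma SF_one: "(1::'a::field) \<in> subfield_GF q"
  by (simp add: subfield_GF_def)

lemma SF_zero: "q > 0 \<Longrightarrow> (0::'a::field) \<in> subfield_GF q"
  by (simp add: subfield_GF_def)

lemma SF_minus_one: assumes "prime CHAR('a::field)" "q = CHAR('a)^k" "k > 0"
  shows "(-1::'a) \<in> subfield_GF q"
proof -
  have q0: "q > 0" using assms prime_gt_0_nat by simp
  have "(1 + (-1::'a)) ^ q = 1 ^ q + (-1) ^ q" by (rule freshmans_dream'[OF assms(1,2)])
  moreover have "(0::'a) ^ q = 0" using q0 by (simp add: zero_power)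
  ultimately have "1 + (-1::'a) ^ q = 0" by simp
  hence "(-1::'a) ^ q = -1" by (simp add: eq_neg_iff_add_eq_0 add.commute)
  thus ?thesis by (simp add: subfield_GF_def)
qed

lemma SF_minus: assumes "prime CHAR('a::field)" "q = CHAR('a)^k" "k > 0"
  "x \<in> subfield_GF q" shows "(-x::'a) \<in> subfield_GF q"
proof -
  have "(-1) * x \<in> subfield_GF q" by (rule SF_mult[OF SF_minus_one[OF assms(1-3)] assms(4)])
  thus ?thesis by simp
qed

lemma SF_diff: assumes "prime CHAR('a::field)" "q = CHAR('a)^k" "k > 0"
  "x \<in> subfield_GF q" "y \<in> subfield_GF q" shows "(x - y::'a) \<in> subfield_GF q"
  using SF_add[OF assms(1,2,4) SF_minus[OF assms(1-3,5)]] by simp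

lemma SF_sum: assumes "prime CHAR('a::field)" "q = CHAR('a)^k" "k > 0"
  "\<forall>x\<in>A. f x \<in> subfield_GF q" shows "(\<Sum>x\<in>A. f x::'a) \<in> subfield_GF q"
proof -
  have q0: "(0::'a) \<in> subfield_GF q"
    by (rule SF_zero) (simp add: assms(2) prime_gt_0_nat[OF assms(1)])
  show ?thesis using assms(4)
  proof (induction A rule: infinite_finite_induct)
    case (infinite A) then show ?case using q0 by simp
  next
    case empty then show ?case using q0 by simp
  next
    case (insert x F) then show ?case using SF_add[OF assms(1,2)] by simp
  qed
qed

lemma SF_prod: assumes "\<forall>x\<in>A. f x \<in> subfield_GF q" shows "(\<Prod>x\<in>A. f x::'a::field) \<in> subfield_GF q"
  using assms
proof (induction A rule: infinite_finite_induct)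
  case (infinite A) then show ?case using SF_one by simp
next
  case empty then show ?case using SF_one by simp
next
  case (insert x F) then show ?case by (auto intro: SF_mult)
qed

lemma SF_iter: "x \<in> subfield_GF q \<Longrightarrow> (x::'a::field) ^ (q ^ n) = x"
  by (induction n) (simp_all add: subfield_GF_def power_mult)

lemma deg_Xpow_const: "n \<ge> 1 \<Longrightarrow> degree ([:0,1:]^n - [:c:] :: 'a::field poly) = n"
proof -
  assume n: "n \<ge> 1"
  have "degree ([:0,1:]^n :: 'a poly) = n" by (simp add: degree_power_eq)
  moreover have "[:0,1:]^n - [:c:] = [:0,1:]^n + [:-c:]" by simp
  ultimately show ?thesis using n by (metis degree_add_eq_left degree_pCons_0 less_le_trans zero_less_one)
qed

lemma lc_Xpow_const: "n \<ge> 1 \<Longrightarrow> lead_coeff ([:0,1:]^n - [:c:] :: 'a::field poly) = 1"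
  using deg_Xpow_const[of n c] by (cases n) (simp_all add: coeff_diff coeff_linear_power)

lemma deg_Xpow_X: "n \<ge> 2 \<Longrightarrow> degree ([:0,1:]^n - [:0,1:] :: 'a::field poly) = n"
proof -
  assume n: "n \<ge> 2"
  have "degree ([:0,1:]^n :: 'a poly) = n" by (simp add: degree_power_eq)
  moreover have "[:0,1:]^n - [:0,1:] = [:0,1:]^n + (- [:0,1::'a:])" by simp
  moreover have "degree (- [:0,1::'a:]) = 1" by simp
  ultimately show ?thesis using n by (metis degree_add_eq_left le_less_trans one_less_numeral_iff semiring_norm(76) less_le_trans)
qed

lemma nat_dvd_pow_minus: "q \<ge> 1 \<Longrightarrow> (q - 1) dvd (q ^ m - (1::nat))"
proof -
  assume q: "q \<ge> 1"
  have "int q - 1 dvd int q ^ m - 1 ^ m" by (rule dvd_pow_diff)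
  moreover have "int (q - 1) = int q - 1" using q by simp
  moreover have "int (q ^ m - 1) = int q ^ m - 1" using q by (simp add: of_nat_diff)
  ultimately have "int (q - 1) dvd int (q ^ m - 1)" by simp
  thus ?thesis by (simp only: int_dvd_int_iff)
qed

lemma card_SF:
  assumes "prime CHAR('a::{field,finite})" "q = CHAR('a)^k" "k > 0" "CARD('a) = q ^ m" "m \<ge> 1"
  shows "card (subfield_GF q :: 'a set) = q"
proof -
  have p2: "CHAR('a) \<ge> 2" using assms(1) prime_ge_2_nat by blast
  have "CHAR('a) ^ 1 \<le> CHAR('a) ^ k" using assms(3) p2 by (intro power_increasing) auto
  hence q2: "q \<ge> 2" using assms(2) p2 by simp
  have "q ^ 1 \<le> q ^ m" using assms(5) q2 by (intro power_increasing) auto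
  hence C2: "CARD('a) \<ge> 2" using assms(4) q2 by simp
  let ?X = "[:0,1::'a:]"
  define g where "g = ?X ^ CARD('a) - ?X"
  define f where "f = ?X ^ q - ?X"
  have dg: "degree g = CARD('a)" unfolding g_def using C2 by (rule deg_Xpow_X)
  have g0: "g \<noteq> 0" using dg C2 by auto
  have rg: "{x. poly g x = 0} = UNIV" unfolding g_def by (auto simp: fin_field_pow_card)
  have cg: "card {x. poly g x = 0} = degree g" unfolding rg dg by simp
  obtain m' where m': "CARD('a) - 1 = (q - 1) * m'"
    using nat_dvd_pow_minus[of q m] q2 assms(4) by auto
  have "?X ^ (q-1) - 1 dvd (?X ^ (q-1)) ^ m' - 1 ^ m'" by (rule dvd_pow_diff)
  hence "?X ^ (q-1) - 1 dvd ?X ^ (CARD('a) - 1) - 1" using m' by (simp add: power_mult)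
  hence "?X * (?X ^ (q-1) - 1) dvd ?X * (?X ^ (CARD('a) - 1) - 1)" by (rule mult_dvd_mono[OF dvd_refl])
  moreover have "?X * (?X ^ (q-1) - 1) = f"
  proof -
    have e: "Suc (q - 1) = q" using q2 by simp
    have h: "?X * ?X^(q-1) = ?X^q" using power_Suc[of ?X "q-1"] e by simp
    show ?thesis unfolding f_def by (simp only: right_diff_distrib h mult_1_right)
  qed
  moreover have "?X * (?X ^ (CARD('a)-1) - 1) = g"
  proof -
    have e: "Suc (CARD('a) - 1) = CARD('a)" using C2 by simp
    have h: "?X * ?X^(CARD('a)-1) = ?X^CARD('a)" using power_Suc[of ?X "CARD('a)-1"] e by simp
    show ?thesis unfolding g_def by (simp only: right_diff_distrib h mult_1_right)
  qed
  ultimately have fg: "f dvd g" by simp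
  have "card {x. poly f x = 0} = degree f" by (rule roots_divisor[OF fg g0 cg])
  moreover have "degree f = q" unfolding f_def using q2 by (rule deg_Xpow_X)
  moreover have "{x. poly f x = 0} = subfield_GF q" unfolding f_def subfield_GF_def by auto
  ultimately show ?thesis by simp
qed

lemma card_fiber:
  assumes "CARD('a::{field,finite}) = t^2" "t \<ge> 2" "(\<beta>::'a) \<noteq> 0" "\<beta> ^ (t - 1) = 1"
  shows "card {x::'a. x ^ (t+1) = \<beta>} = t + 1"
proof -
  let ?X = "[:0,1::'a:]"
  have tt: "(t+1)*(t-1) = t^2 - 1" using assms(2) by (cases t) (auto simp: power2_eq_square)
  have t1: "t^2 - 1 \<ge> 1" using assms(2) by (cases t) (auto simp: power2_eq_square)
  define g where "g = ?X ^ (t^2 - 1) - [:1:]"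
  define f where "f = ?X ^ (t+1) - [:\<beta>:]"
  have dg: "degree g = t^2 - 1" unfolding g_def using t1 by (rule deg_Xpow_const)
  have g0: "g \<noteq> 0" using dg t1 by auto
  have rg: "{x. poly g x = 0} = UNIV - {0}"
  proof (auto simp: g_def)
    show "(0::'a) ^ (t\<^sup>2 - Suc 0) = 1 \<Longrightarrow> False" using t1 by (simp add: zero_power)
  next
    fix x :: 'a assume x: "x \<noteq> 0"
    have e: "t^2 = Suc (t^2 - 1)" using t1 by simp
    have "x * x ^ (t^2 - 1) = x ^ (t^2)" by (subst (2) e) simp
    also have "\<dots> = x" using fin_field_pow_card[of x] assms(1) by simp
    finally show "x ^ (t\<^sup>2 - Suc 0) = 1" using x by simp
  qed
  have cg: "card {x. poly g x = 0} = degree g" unfolding rg dg using assms(1) by (simp add: card_Diff_singleton)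
  have "?X ^ (t+1) - [:\<beta>:] dvd (?X ^ (t+1)) ^ (t-1) - [:\<beta>:] ^ (t-1)" by (rule dvd_pow_diff)
  moreover have "[:\<beta>:] ^ (t-1) = [:1:]" using assms(4) by (simp add: poly_const_pow)
  moreover have "(?X^(t+1))^(t-1) = ?X^(t^2-1)" by (simp only: power_mult[symmetric] tt)
  ultimately have fg: "f dvd g" unfolding f_def g_def by simp
  have "card {x. poly f x = 0} = degree f" by (rule roots_divisor[OF fg g0 cg])
  moreover have "degree f = t + 1" unfolding f_def by (rule deg_Xpow_const) simp
  moreover have "{x. poly f x = 0} = {x. x ^ (t+1) = \<beta>}" unfolding f_def by auto
  ultimately show ?thesis by simp
qed

lemma pderiv_eval:
  fixes a :: "'a::field"
  assumes t0: "of_nat t = (0::'a)" and finB: "finite B"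
  shows "poly (pderiv ([:0,1:] * (\<Prod>\<beta>\<in>B. [:0,1:]^(t+1) - [:\<beta>:]))) a
       = (\<Prod>\<beta>\<in>B. a^(t+1) - \<beta>) + a^(t+1) * (\<Sum>\<beta>\<in>B. \<Prod>\<gamma>\<in>B-{\<beta>}. a^(t+1) - \<gamma>)"
proof -
  have dX: "pderiv [:0,1::'a:] = 1" by (simp add: pderiv_pCons)
  have d1: "pderiv ([:0,1:]^(t+1) - [:\<beta>:]) = smult (of_nat (t+1)) ([:0,1:]^t)" for \<beta> :: 'a
  proof -
    have e: "t + 1 = Suc t" by simp
    show ?thesis by (subst e, subst e, subst pderiv_diff, subst pderiv_power_Suc) (simp add: dX pderiv_pCons)
  qed
  have o1: "(of_nat (t+1) :: 'a) = 1" using t0 by simp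
  have pd: "pderiv ([:0,1::'a:] * (\<Prod>\<beta>\<in>B. [:0,1:]^(t+1) - [:\<beta>:]))
      = [:0,1:] * (\<Sum>\<beta>\<in>B. (\<Prod>\<gamma>\<in>B-{\<beta>}. [:0,1:]^(t+1) - [:\<gamma>:]) * [:0,1:]^t)
        + (\<Prod>\<beta>\<in>B. [:0,1:]^(t+1) - [:\<beta>:])"
    by (simp only: pderiv_mult pderiv_prod d1 o1 smult_1_left dX mult_1_right)
  show ?thesis unfolding pd
    by (simp add: poly_sum poly_prod sum_distrib_left sum_distrib_right mult_ac)
qed

theorem theorem1:
  fixes q l t i :: nat
    and G6 :: "'a::{field,finite} poly" and L6 :: "'a set"
  assumes "\<exists>p k. prime p \<and> k > 0 \<and> q = p ^ k"
    and "l \<ge> 1"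
    and "t = q ^ l"
    and "CARD('a) = t ^ 2"
    and "G6 = monom 1 (t + 1) + 1"
    and "L6 = {\<alpha>. poly G6 \<alpha> \<noteq> 0}"
    and "1 < i" and "i < q - 1"
  shows "min_distance L6 (goppa_code q L6 (G6 ^ i)) = i * (t + 1) + 1"
proof -
  obtain p k where pk: "prime p" "k > 0" "q = p ^ k" using assms(1) by blast
  have C0: "CHAR('a) > 0" by (rule finite_imp_CHAR_pos) simp
  have Cp: "prime CHAR('a)" using prime_CHAR_semidom C0 by blast
  have "CARD('a) = p ^ (k * l * 2)" using assms(3,4) pk(3) by (simp add: power_mult)
  hence "CHAR('a) dvd p ^ (k * l * 2)" using CHAR_dvd_CARD' by metis
  hence "CHAR('a) dvd p" using prime_dvd_power Cp by blast
  hence Cpe: "CHAR('a) = p" using primes_dvd_imp_eq Cp pk(1) by blast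
  have qC: "q = CHAR('a) ^ k" using pk Cpe by simp
  have p2: "p \<ge> 2" using pk(1) prime_ge_2_nat by blast
  have "p ^ 1 \<le> p ^ k" using pk(2) p2 by (intro power_increasing) auto
  hence q2: "q \<ge> 2" using pk(3) p2 by simp
  have "q ^ 1 \<le> q ^ l" using assms(2) q2 by (intro power_increasing) auto
  hence t2: "t \<ge> 2" using assms(3) q2 by simp
  have tC: "t = CHAR('a) ^ (k * l)" using assms(3) qC by (simp add: power_mult)
  have "CHAR('a) dvd t" unfolding tC using pk(2) assms(2) by simp
  hence t0: "of_nat t = (0::'a)" using of_nat_eq_0_iff_char_dvd by blast
  define SF where "SF = (subfield_GF q :: 'a set)"
  have cardSF: "card SF = q" unfolding SF_def
    by (rule card_SF[OF Cp qC pk(2), of "2*l"]) (use assms(2,3,4) in \<open>simp_all add: power_mult mult.commute\<close>)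
  have finSF: "finite SF" by simp
  have SF0: "0 \<in> SF" unfolding SF_def using q2 by (intro SF_zero) simp
  have SFm1: "-1 \<in> SF" unfolding SF_def by (rule SF_minus_one[OF Cp qC pk(2)])
  have "card (SF - {0, -1}) = card SF - card {0, -1::'a}"
    using SF0 SFm1 by (intro card_Diff_subset) auto
  also have "card {0, -1::'a} = 2" by simp
  finally have "card (SF - {0,-1}) = q - 2" using cardSF by simp
  hence "i \<le> card (SF - {0,-1})" using assms(8) by simp
  then obtain B where B: "B \<subseteq> SF - {0,-1}" "card B = i" "finite B"
    by (rule obtain_subset_with_card_n)
  have Bt: "\<beta> ^ t = \<beta>" if "\<beta> \<in> B" for \<beta>
    using SF_iter[of \<beta> q l] that B(1) assms(3) unfolding SF_def by auto
  have Bt1: "\<beta> ^ (t - 1) = 1" if "\<beta> \<in> B" for \<beta>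
  proof -
    have "\<beta> \<noteq> 0" using that B(1) by auto
    moreover have "\<beta> * \<beta> ^ (t - 1) = \<beta> * 1"
    proof -
      have e: "Suc (t - 1) = t" using t2 by simp
      have "\<beta> * \<beta> ^ (t - 1) = \<beta> ^ Suc (t - 1)" by (rule power_Suc[symmetric])
      also have "\<dots> = \<beta>" unfolding e by (rule Bt[OF that])
      finally show ?thesis by simp
    qed
    ultimately show ?thesis by simp
  qed
  define R where "R \<beta> = {x::'a. x ^ (t+1) = \<beta>}" for \<beta>
  have cardR: "card (R \<beta>) = t + 1" if "\<beta> \<in> B" for \<beta>
    unfolding R_def using assms(4) t2 _ Bt1[OF that] by (rule card_fiber) (use that B(1) in auto)
  define S where "S = insert 0 (\<Union>\<beta>\<in>B. R \<beta>)"
  have finS: "finite S" by simp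
  have "card (\<Union>\<beta>\<in>B. R \<beta>) = (\<Sum>\<beta>\<in>B. card (R \<beta>))"
    by (rule card_UN_disjoint[OF B(3)]) (auto simp: R_def)
  also have "\<dots> = i * (t + 1)" using cardR B(2) by simp
  finally have "card (\<Union>\<beta>\<in>B. R \<beta>) = i * (t + 1)" .
  moreover have "0 \<notin> (\<Union>\<beta>\<in>B. R \<beta>)" using B(1) by (auto simp: R_def)
  ultimately have cardS: "card S = i * (t + 1) + 1" unfolding S_def by simp
  define f where "f = [:0,1::'a:] * (\<Prod>\<beta>\<in>B. [:0,1:]^(t+1) - [:\<beta>:])"
  have F0: "[:0,1::'a:]^(t+1) - [:\<beta>:] \<noteq> 0" for \<beta>
    using deg_Xpow_const[of "t+1" \<beta>] by auto
  have H0: "(\<Prod>\<beta>\<in>B. [:0,1::'a:]^(t+1) - [:\<beta>:]) \<noteq> 0" using F0 B(3) by simp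
  have f0: "f \<noteq> 0" unfolding f_def using H0 by simp
  have "degree (\<Prod>\<beta>\<in>B. [:0,1::'a:]^(t+1) - [:\<beta>:]) = (\<Sum>\<beta>\<in>B. degree ([:0,1::'a:]^(t+1) - [:\<beta>:]))"
    by (rule degree_prod_eq_sum_degree) (use F0 in auto)
  also have "\<dots> = (\<Sum>\<beta>\<in>B. t + 1)"
    by (rule sum.cong[OF refl], rule deg_Xpow_const) simp
  also have "\<dots> = i * (t + 1)" using B(2) by simp
  finally have dH: "degree (\<Prod>\<beta>\<in>B. [:0,1::'a:]^(t+1) - [:\<beta>:]) = i * (t + 1)" .
  have df: "degree f = i * (t + 1) + 1" unfolding f_def using H0 dH by (simp add: degree_mult_eq)
  have lcF: "lead_coeff ([:0,1::'a:]^(t+1) - [:\<beta>:]) = 1" for \<beta>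
    by (rule lc_Xpow_const) simp
  have "lead_coeff f = lead_coeff [:0,1::'a:] * (\<Prod>\<beta>\<in>B. lead_coeff ([:0,1::'a:]^(t+1) - [:\<beta>:]))"
    unfolding f_def by (simp only: lead_coeff_mult lead_coeff_prod)
  hence lf: "lead_coeff f = 1" by (simp only: lcF prod.neutral_const) simp
  have pf: "poly f x = x * (\<Prod>\<beta>\<in>B. x^(t+1) - \<beta>)" for x
    unfolding f_def by (simp add: poly_prod)
  have rf: "{x. poly f x = 0} = S"
  proof (rule set_eqI)
    fix x
    have "poly f x = 0 \<longleftrightarrow> x = 0 \<or> (\<exists>\<beta>\<in>B. x^(t+1) - \<beta> = 0)"
      by (simp only: pf mult_eq_0_iff prod_zero_iff[OF B(3)])
    also have "\<dots> \<longleftrightarrow> x \<in> S" unfolding S_def R_def by auto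
    finally show "x \<in> {x. poly f x = 0} \<longleftrightarrow> x \<in> S" by simp
  qed
  have fS: "f = (\<Prod>b\<in>S. [:-b,1:])"
    using split_poly[OF f0] rf df cardS lf by simp
  define E where "E s = (\<Prod>\<beta>\<in>B. s - \<beta>) + s * (\<Sum>\<beta>\<in>B. \<Prod>\<gamma>\<in>B-{\<beta>}. s - \<gamma>)" for s :: 'a
  have pdS: "(\<Prod>b\<in>S-{a}. a - b) = E (a ^ (t+1))" if "a \<in> S" for a
  proof -
    have "(\<Prod>b\<in>S-{a}. a - b) = poly (pderiv (\<Prod>b\<in>S. [:-b,1:])) a"
      by (rule poly_pderiv_prod_lin[OF finS that, symmetric])
    also have "\<dots> = poly (pderiv f) a" using fS by simp
    also have "\<dots> = E (a ^ (t+1))" unfolding f_def E_def by (rule pderiv_eval[OF t0 B(3)])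
    finally show ?thesis .
  qed
  have sS: "a ^ (t+1) \<in> SF" if "a \<in> S" for a
    using that B(1) SF0 unfolding S_def R_def by auto
  have polyG: "poly G6 a = a ^ (t+1) + 1" for a
    using assms(5) by (simp add: poly_monom)
  have SL: "S \<subseteq> L6"
  proof
    fix a assume "a \<in> S"
    hence "a = 0 \<or> (\<exists>\<beta>\<in>B. a ^ (t+1) = \<beta>)" unfolding S_def R_def by auto
    hence "a ^ (t+1) + 1 \<noteq> 0" using B(1)
      by (auto simp: eq_neg_iff_add_eq_0[symmetric])
    thus "a \<in> L6" using assms(6) polyG by simp
  qed
  define P where "P = G6 ^ i"
  have polyP: "poly P a = (a ^ (t+1) + 1) ^ i" for a
    unfolding P_def by (simp only: poly_power polyG)
  have dm: "degree (monom (1::'a) (t+1)) = t+1" by (rule degree_monom_eq) simp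
  have "degree (monom (1::'a) (t+1) + 1) = degree (monom (1::'a) (t+1))"
    by (rule degree_add_eq_left) (use dm in simp)
  hence G0: "degree G6 = t + 1" using assms(5) dm by simp
  have G6nz: "G6 \<noteq> 0" using G0 by auto
  have dP: "degree P = i * (t + 1)" unfolding P_def by (simp only: degree_power_eq[OF G6nz] G0)
  have P0: "P \<noteq> 0" unfolding P_def using G6nz by simp
  have PL: "\<forall>a\<in>L6. poly P a \<noteq> 0"
  proof
    fix a assume "a \<in> L6"
    hence "poly G6 a \<noteq> 0" using assms(6) by simp
    thus "poly P a \<noteq> 0" unfolding P_def poly_power by simp
  qed
  have finL: "finite L6" by simp
  have prodnz: "(\<Prod>b\<in>S-{a}. a - b) \<noteq> 0" for a using finS by simp
  define c where "c a = (if a \<in> S then poly P a / (\<Prod>b\<in>S-{a}. a - b) else 0)" for a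
  have cS: "\<forall>x\<in>S. c x * (\<Prod>b\<in>S-{x}. x - b) = poly P x" using prodnz unfolding c_def by simp
  have cout: "\<forall>a. a \<notin> S \<longrightarrow> c a = 0" unfolding c_def by simp
  have cdvd: "P dvd (\<Sum>a\<in>L6. smult (c a) (inv_mod_lin P a))"
    by (rule goppa_upper[OF finL SL PL _ cS cout]) (simp add: cardS dP)
  have cSF: "c a \<in> subfield_GF q" for a
  proof (cases "a \<in> S")
    case False then show ?thesis using SF0 unfolding c_def SF_def by simp
  next
    case True
    let ?s = "a ^ (t+1)"
    have s: "?s \<in> SF" using sS[OF True] .
    have BS: "\<forall>\<beta>\<in>B. \<beta> \<in> SF" using B(1) by auto
    have "E ?s \<in> SF" unfolding E_def SF_def
      using s BS unfolding SF_def
      by (intro SF_add[OF Cp qC] SF_mult SF_prod SF_sum[OF Cp qC pk(2)] ballI SF_diff[OF Cp qC pk(2)]) auto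
    moreover have "poly P a \<in> SF" unfolding polyP SF_def
      using s unfolding SF_def by (rule SF_pow[OF SF_add[OF Cp qC _ SF_one]])
    ultimately show ?thesis using True pdS[OF True] unfolding c_def SF_def by (simp add: SF_divide)
  qed
  have cmem: "c \<in> goppa_code q L6 P"
    unfolding goppa_code_def using cout SL cSF cdvd by auto
  have wS: "{a\<in>L6. c a \<noteq> 0} = S"
  proof
    show "{a\<in>L6. c a \<noteq> 0} \<subseteq> S" using cout by auto
    show "S \<subseteq> {a\<in>L6. c a \<noteq> 0}"
    proof
      fix a assume "a \<in> S"
      hence "a \<in> L6" using SL by auto
      hence "poly P a \<noteq> 0" using PL by auto
      hence "c a \<noteq> 0" using \<open>a \<in> S\<close> prodnz unfolding c_def by simp
      thus "a \<in> {a\<in>L6. c a \<noteq> 0}" using \<open>a \<in> L6\<close> by simp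
    qed
  qed
  have cnz: "c \<noteq> (\<lambda>_. 0)"
  proof
    assume "c = (\<lambda>_. 0)"
    hence "{a\<in>L6. c a \<noteq> 0} = {}" by simp
    thus False using wS unfolding S_def by simp
  qed
  have mem: "i * (t + 1) + 1 \<in> {hamming_weight L6 c |c. c \<in> goppa_code q L6 P \<and> c \<noteq> (\<lambda>_. 0)}"
  proof -
    have hw: "hamming_weight L6 c = i * (t + 1) + 1" using wS cardS unfolding hamming_weight_def by simp
    show ?thesis unfolding mem_Collect_eq by (rule exI[of _ c]) (simp only: hw cmem cnz simp_thms)
  qed
  have low: "i * (t + 1) + 1 \<le> w" if wmem: "w \<in> {hamming_weight L6 c |c. c \<in> goppa_code q L6 P \<and> c \<noteq> (\<lambda>_. 0)}" for w
  proof -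
    obtain c' where c': "w = hamming_weight L6 c'" "c' \<in> goppa_code q L6 P" "c' \<noteq> (\<lambda>_. 0)"
      using wmem by blast
    have "degree P + 1 \<le> card {a\<in>L6. c' a \<noteq> 0}"
      by (rule goppa_lower[OF P0 finL PL]) (use c' in \<open>auto simp: goppa_code_def\<close>)
    thus ?thesis using c'(1) dP unfolding hamming_weight_def by simp
  qed
  show ?thesis unfolding min_distance_def P_def[symmetric]
    by (rule cInf_eq_minimum[OF mem low])
qed

end
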